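(* With $T=\mathcal{P}_{\mathsf{ufs}}$, $FX=1+\mathbb{A}\times X+[\mathbb{A}]X$ and $GX=2\times X^{\mathbb{A}}\times[\mathbb{A}]X$, the natural transformation $\varepsilon\colon TF\to GT$ given by $\varepsilon_X(S)=(b,\,a\mapsto S_a,\,S_{\mathord{|}a})$, where $b=1$ iff $*\in S$, $S_a=\{s:(a,s)\in S\}$ and $S_{\mathord{|}a}=\langle a\rangle\{s:\langle a\rangle s\in S\}$ for $a$ fresh for $S$, is an extension natural transformation, i.e. it satisfies $\varepsilon\cdot\mu F\cdot T\lambda=G\mu\cdot\varepsilon T$ and $\varepsilon\cdot\mu F=G\mu\cdot\rho T\cdot T\varepsilon$.
   Context: Fix a countably infinite set $\mathbb{A}$ of names; $\mathsf{Nom}$ is the category of nominal sets and equivariant maps; $1=\{*\}$, $2=\{0,1\}$. $[\mathbb{A}]X=(\mathbb{A}\times X)/\sim$, $(a,x)\sim(b,y)$ iff $(a\,c)\cdot x=(b\,c)\cdot y$ for fresh $c$, classes $\langle a\rangle x$. $T=\mathcal{P}_{\mathsf{ufs}}$ is the monad of uniformly finitely supported subsets (subsets $A$ with $\bigcup_{x\in A}\mathrm{supp}(x)$ finite), with unit $\eta$ singleton and multiplication $\mu$ union. $\lambda\colon FT\to TF$ is the distributive law $\lambda_X( * )=\{*\}$, $\lambda_X(a,S)=\{(a,x):x\in S\}$, $\lambda_X(\langle a\rangle S)=\{\langle a\rangle s:s\in S\}$. $\rho\colon TG\to GT$ is the distributive law of the canonical lifting of $G$: with product projections $p_0,p_1,p_2$,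 $\rho_X(S)=(b,\,a\mapsto\{f(a):f\in p_1[S]\},\,\langle a\rangle\{s:\langle a\rangle s\in p_2[S]\})$ where $b=1$ iff $1\in p_0[S]$ and $a$ is fresh for $p_2[S]$. *)

theory Defs
  imports Main
begin

text \<open>Names: the countably infinite set of atoms is represented by nat.
 Finite permutations are bijections nat to nat moving only finitely many names.\<close>

type_synonym name = nat

definition fperm :: "(name \<Rightarrow> name) \<Rightarrow> bool" where
  "fperm p \<longleftrightarrow> bij p \<and> finite {a. p a \<noteq> a}"

definition swp :: "name \<Rightarrow> name \<Rightarrow> name \<Rightarrow> name" where
  "swp a b c = (if c = a then b else if c = b then a else c)"

definition supports :: "((name \<Rightarrow> name) \<Rightarrow> 'x \<Rightarrow> 'x) \<Rightarrow> name set \<Rightarrow> 'x \<Rightarrow> bool" where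
  "supports act A x \<longleftrightarrow> (\<forall>p. fperm p \<and> (\<forall>a\<in>A. p a = a) \<longrightarrow> act p x = x)"

definition supp :: "((name \<Rightarrow> name) \<Rightarrow> 'x \<Rightarrow> 'x) \<Rightarrow> 'x \<Rightarrow> name set" where
  "supp act x = \<Inter>{A. finite A \<and> supports act A x}"

definition nominal_set :: "'x set \<Rightarrow> ((name \<Rightarrow> name) \<Rightarrow> 'x \<Rightarrow> 'x) \<Rightarrow> bool" where
  "nominal_set X act \<longleftrightarrow>
     (\<forall>x. act id x = x) \<and>
     (\<forall>p q x. fperm p \<longrightarrow> fperm q \<longrightarrow> act (p \<circ> q) x = act p (act q x)) \<and>
     (\<forall>p x. fperm p \<longrightarrow> x \<in> X \<longrightarrow> act p x \<in> X) \<and>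
     (\<forall>x\<in>X. \<exists>A. finite A \<and> supports act A x)"

text \<open>The class <a>x of (a,x) under (a,x) ~ (b,y) iff (a c).x = (b c).y for fresh c.\<close>
definition abs :: "((name \<Rightarrow> name) \<Rightarrow> 'x \<Rightarrow> 'x) \<Rightarrow> name \<Rightarrow> 'x \<Rightarrow> (name \<times> 'x) set" where
  "abs act a x = {(b, y). \<exists>c. c \<noteq> a \<and> c \<noteq> b \<and> c \<notin> supp act x \<and> c \<notin> supp act y
                       \<and> act (swp a c) x = act (swp b c) y}"

definition absact :: "((name \<Rightarrow> name) \<Rightarrow> 'x \<Rightarrow> 'x) \<Rightarrow> (name \<Rightarrow> name) \<Rightarrow> (name \<times> 'x) set \<Rightarrow> (name \<times> 'x) set" where
  "absact act p \<alpha> = (\<lambda>(b, y). (p b, act p y)) ` \<alpha>"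

text \<open>Functorial action [A]f on abstractions: [A]f(<a>x) = <a>(f x) (act' = action of target).\<close>
definition absmap :: "((name \<Rightarrow> name) \<Rightarrow> 'y \<Rightarrow> 'y) \<Rightarrow> ('x \<Rightarrow> 'y) \<Rightarrow> (name \<times> 'x) set \<Rightarrow> (name \<times> 'y) set" where
  "absmap act' f \<alpha> = (let z = (SOME z. z \<in> \<alpha>) in abs act' (fst z) (f (snd z)))"

definition Tact :: "((name \<Rightarrow> name) \<Rightarrow> 'x \<Rightarrow> 'x) \<Rightarrow> (name \<Rightarrow> name) \<Rightarrow> 'x set \<Rightarrow> 'x set" where
  "Tact act p S = act p ` S"

definition Tc :: "'x set \<Rightarrow> ((name \<Rightarrow> name) \<Rightarrow> 'x \<Rightarrow> 'x) \<Rightarrow> 'x set set" where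
  "Tc X act = {S. S \<subseteq> X \<and> finite (\<Union>x\<in>S. supp act x)}"

datatype 'x F = FStar | FPair name 'x | FAbs "(name \<times> 'x) set"

definition Fact :: "((name \<Rightarrow> name) \<Rightarrow> 'x \<Rightarrow> 'x) \<Rightarrow> (name \<Rightarrow> name) \<Rightarrow> 'x F \<Rightarrow> 'x F" where
  "Fact act p t = (case t of FStar \<Rightarrow> FStar
                           | FPair a x \<Rightarrow> FPair (p a) (act p x)
                           | FAbs \<alpha> \<Rightarrow> FAbs (absact act p \<alpha>))"

definition Fc :: "'x set \<Rightarrow> ((name \<Rightarrow> name) \<Rightarrow> 'x \<Rightarrow> 'x) \<Rightarrow> 'x F set" where
  "Fc X act = {FStar} \<union> {FPair a x | a x. x \<in> X} \<union> {FAbs (abs act a x) | a x. x \<in> X}"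

type_synonym 'x G = "bool \<times> (name \<Rightarrow> 'x) \<times> (name \<times> 'x) set"

definition Gmap :: "('x \<Rightarrow> 'y) \<Rightarrow> ((name \<Rightarrow> name) \<Rightarrow> 'y \<Rightarrow> 'y) \<Rightarrow> 'x G \<Rightarrow> 'y G" where
  "Gmap f act' g = (case g of (b, h, \<alpha>) \<Rightarrow> (b, f \<circ> h, absmap act' f \<alpha>))"

definition lam :: "((name \<Rightarrow> name) \<Rightarrow> 'x \<Rightarrow> 'x) \<Rightarrow> 'x set F \<Rightarrow> 'x F set" where
  "lam act t = (case t of FStar \<Rightarrow> {FStar}
                        | FPair a S \<Rightarrow> {FPair a x | x. x \<in> S}
                        | FAbs \<alpha> \<Rightarrow> (let z = (SOME z. z \<in> \<alpha>)
                                     in {FAbs (abs act (fst z) s) | s. s \<in> snd z}))"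

definition rho :: "((name \<Rightarrow> name) \<Rightarrow> 'x \<Rightarrow> 'x) \<Rightarrow> 'x G set \<Rightarrow> 'x set G" where
  "rho act S =
     (let P2 = (\<lambda>g. snd (snd g)) ` S;
          a = (SOME a. a \<notin> supp (Tact (absact act)) P2)
      in (True \<in> fst ` S,
          \<lambda>a. {f a | f. f \<in> (\<lambda>g. fst (snd g)) ` S},
          abs (Tact act) a {s. abs act a s \<in> P2}))"

definition eps :: "((name \<Rightarrow> name) \<Rightarrow> 'x \<Rightarrow> 'x) \<Rightarrow> 'x F set \<Rightarrow> 'x set G" where
  "eps act S =
     (let a = (SOME a. a \<notin> supp (Tact (Fact act)) S)
      in (FStar \<in> S,
          \<lambda>a. {s. FPair a s \<in> S},
          abs (Tact act) a {s. FAbs (abs act a s) \<in> S}))"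

end

theory Submission
  imports Defs
begin


lemma fperm_id[simp]: "fperm id"
  by (simp add: fperm_def)

lemma fperm_comp[simp]: "fperm p \<Longrightarrow> fperm q \<Longrightarrow> fperm (p \<circ> q)"
proof -
  assume a: "fperm p" "fperm q"
  have "{a. (p \<circ> q) a \<noteq> a} \<subseteq> {a. p a \<noteq> a} \<union> {a. q a \<noteq> a}" by auto
  then show ?thesis using a unfolding fperm_def by (auto intro: bij_comp elim: finite_subset)
qed

lemma fperm_inv[simp]: "fperm p \<Longrightarrow> fperm (inv p)"
proof -
  assume "fperm p"
  then have b: "bij p" and f: "finite {a. p a \<noteq> a}" by (auto simp: fperm_def)
  have "{a. inv p a \<noteq> a} = {a. p a \<noteq> a}"
    using b by (auto simp: bij_inv_eq_iff) (metis bij_inv_eq_iff)+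
  then show ?thesis using b f by (simp add: fperm_def bij_imp_bij_inv)
qed

lemma swp_swp[simp]: "swp a b (swp a b x) = x"
  by (simp add: swp_def)

lemma swp_o_swp[simp]: "swp a b \<circ> swp a b = id"
  by (auto simp: swp_def)

lemma swp_same[simp]: "swp a a = id"
  by (auto simp: swp_def)

lemma swp_sym: "swp a b = swp b a"
  by (auto simp: swp_def)

lemma fperm_swp[simp]: "fperm (swp a b)"
  unfolding fperm_def
proof
  show "bij (swp a b)" by (rule o_bij[of "swp a b"]) simp_all
  have "{c. swp a b c \<noteq> c} \<subseteq> {a, b}" by (auto simp: swp_def)
  then show "finite {c. swp a b c \<noteq> c}" by (rule finite_subset) simp
qed

lemma fresh_ex: "finite (A::name set) \<Longrightarrow> \<exists>c. c \<notin> A"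
  using ex_new_if_finite[OF infinite_UNIV_nat] by blast

definition perm_act :: "((name \<Rightarrow> name) \<Rightarrow> 'x \<Rightarrow> 'x) \<Rightarrow> bool" where
  "perm_act act \<longleftrightarrow> (\<forall>x. act id x = x) \<and>
     (\<forall>p q x. fperm p \<longrightarrow> fperm q \<longrightarrow> act (p \<circ> q) x = act p (act q x))"

lemma pa_id[simp]: "perm_act act \<Longrightarrow> act id x = x"
  by (simp add: perm_act_def)

lemma pa_comp: "perm_act act \<Longrightarrow> fperm p \<Longrightarrow> fperm q \<Longrightarrow> act (p \<circ> q) x = act p (act q x)"
  by (simp add: perm_act_def)

lemma pa_inv_l[simp]: "perm_act act \<Longrightarrow> fperm p \<Longrightarrow> act (inv p) (act p x) = x"
proof -
  assume a: "perm_act act" "fperm p"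
  then have "inv p \<circ> p = id" by (simp add: fperm_def bij_is_inj)
  then show ?thesis using a pa_comp[of act "inv p" p x] by simp
qed

lemma pa_inv_r[simp]: "perm_act act \<Longrightarrow> fperm p \<Longrightarrow> act p (act (inv p) x) = x"
proof -
  assume a: "perm_act act" "fperm p"
  then have "p \<circ> inv p = id" by (simp add: fperm_def bij_is_surj surj_iff[symmetric])
  then show ?thesis using a pa_comp[of act p "inv p" x] by simp
qed

lemma pa_inj: "perm_act act \<Longrightarrow> fperm p \<Longrightarrow> act p x = act p y \<longleftrightarrow> x = y"
  by (metis pa_inv_l)

lemma pa_swp_swp[simp]: "perm_act act \<Longrightarrow> act (swp a b) (act (swp a b) x) = x"
  using pa_comp[of act "swp a b" "swp a b" x] by simp



lemma supp_subset: "finite A \<Longrightarrow> supports act A x \<Longrightarrow> supp act x \<subseteq> A"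
  unfolding supp_def by blast

lemma supp_notin: "a \<notin> supp act x \<Longrightarrow> \<exists>A. finite A \<and> supports act A x \<and> a \<notin> A"
  unfolding supp_def by blast

lemma supp_infinite_UNIV: "\<not> finite (supp act x) \<Longrightarrow> supp act x = UNIV"
proof -
  assume nf: "\<not> finite (supp act x)"
  have e: "{A. finite A \<and> supports act A x} = {}"
  proof (rule ccontr)
    assume "{A. finite A \<and> supports act A x} \<noteq> {}"
    then obtain A where "finite A" "supports act A x" by blast
    then have "supp act x \<subseteq> A" by (rule supp_subset)
    then show False using nf \<open>finite A\<close> finite_subset by blast
  qed
  show ?thesis by (simp only: supp_def e Inter_empty)
qed

lemma swap_fresh:
  assumes pa: "perm_act act" and a: "a \<notin> supp act x" and b: "b \<notin> supp act x"
  shows "act (swp a b) x = x"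
proof -
  obtain A where A: "finite A" "supports act A x" "a \<notin> A" using supp_notin[OF a] by blast
  obtain B where B: "finite B" "supports act B x" "b \<notin> B" using supp_notin[OF b] by blast
  obtain c where c: "c \<notin> A \<union> B \<union> {a, b}" using fresh_ex[of "A \<union> B \<union> {a, b}"] A B by blast
  have 1: "act (swp a c) x = x" using A(2) unfolding supports_def
    by (rule allE[where x="swp a c"]) (use A(3) c in \<open>auto simp: swp_def\<close>)
  have 2: "act (swp b c) x = x" using B(2) unfolding supports_def
    by (rule allE[where x="swp b c"]) (use B(3) c in \<open>auto simp: swp_def\<close>)
  show ?thesis
  proof (cases "a = b")
    case True then show ?thesis using pa by simp
  next
    case False
    have e: "swp a b = swp a c \<circ> (swp b c \<circ> swp a c)" using c False by (intro ext) (auto simp: swp_def)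
    show ?thesis using 1 2 by (simp add: e pa_comp[OF pa])
  qed
qed

lemma fixes_supp_aux:
  assumes pa: "perm_act act"
  shows "\<forall>p. fperm p \<and> card {a. p a \<noteq> a} = n \<and> (\<forall>a\<in>supp act x. p a = a) \<longrightarrow> act p x = x"
proof (induction n rule: less_induct)
  case (less n)
  show ?case
  proof (intro allI impI)
    fix p assume h: "fperm p \<and> card {a. p a \<noteq> a} = n \<and> (\<forall>a\<in>supp act x. p a = a)"
    then have fp: "fperm p" and fin: "finite {a. p a \<noteq> a}" and bp: "bij p" by (auto simp: fperm_def)
    show "act p x = x"
    proof (cases "{a. p a \<noteq> a} = {}")
      case True
      then have "p = id" by auto
      then show ?thesis using pa by simp
    next
      case False
      then obtain a where a: "p a \<noteq> a" by auto
      have ip: "inj p" using bp bij_is_inj by blast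
      define p' where "p' = swp a (p a) \<circ> p"
      have fp': "fperm p'" using fp by (simp add: p'_def)
      have sub: "{d. p' d \<noteq> d} \<subseteq> {d. p d \<noteq> d} - {a}"
      proof
        fix d assume d: "d \<in> {d. p' d \<noteq> d}"
        have "p d \<noteq> d"
        proof
          assume pd: "p d = d"
          have "d \<noteq> p a" using pd a ip by (metis injD)
          moreover have "d \<noteq> a" using pd a by auto
          ultimately show False using d pd by (auto simp: p'_def swp_def)
        qed
        moreover have "d \<noteq> a" using d a by (auto simp: p'_def swp_def)
        ultimately show "d \<in> {d. p d \<noteq> d} - {a}" by auto
      qed
      have "card {d. p' d \<noteq> d} < n"
      proof -
        have "card {d. p' d \<noteq> d} \<le> card ({d. p d \<noteq> d} - {a})"
          using sub fin by (intro card_mono) auto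
        also have "\<dots> < card {d. p d \<noteq> d}" using fin a by (intro card_Diff1_less) auto
        finally show ?thesis using h by simp
      qed
      moreover have "\<forall>e\<in>supp act x. p' e = e"
      proof
        fix e assume e: "e \<in> supp act x"
        then have pe: "p e = e" using h by auto
        have "e \<noteq> a" using pe a by auto
        moreover have "e \<noteq> p a" using pe a ip by (metis injD)
        ultimately show "p' e = e" using pe by (auto simp: p'_def swp_def)
      qed
      ultimately have IH: "act p' x = x" using less fp' by blast
      have "p = swp a (p a) \<circ> p'" by (simp add: p'_def o_assoc)
      then have "act p x = act (swp a (p a)) (act p' x)"
        using pa_comp[OF pa fperm_swp[of a "p a"] fp', of x] by metis
      also have "\<dots> = act (swp a (p a)) x" using IH by simp
      also have "\<dots> = x"
      proof (rule swap_fresh[OF pa])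
        show "a \<notin> supp act x" using h a by auto
        show "p a \<notin> supp act x"
        proof
          assume "p a \<in> supp act x"
          then have "p (p a) = p a" using h by auto
          then show False using a ip by (metis injD)
        qed
      qed
      finally show ?thesis .
    qed
  qed
qed

lemma fixes_supp: "perm_act act \<Longrightarrow> fperm p \<Longrightarrow> (\<And>a. a \<in> supp act x \<Longrightarrow> p a = a) \<Longrightarrow> act p x = x"
  using fixes_supp_aux[of act "card {a. p a \<noteq> a}" x] by auto

lemma supp_supports: "perm_act act \<Longrightarrow> supports act (supp act x) x"
  unfolding supports_def by (intro allI impI, rule fixes_supp) auto

lemma act_agree:
  assumes pa: "perm_act act" and p: "fperm p" and q: "fperm q" and ag: "\<And>e. e \<in> supp act x \<Longrightarrow> p e = q e"
  shows "act p x = act q x"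
proof -
  have bq: "bij q" using q by (simp add: fperm_def)
  have "act (inv q \<circ> p) x = x"
  proof (rule fixes_supp[OF pa])
    show "fperm (inv q \<circ> p)" using p q by simp
    fix a assume "a \<in> supp act x" then show "(inv q \<circ> p) a = a" using ag bq
      by (simp add: bij_is_inj)
  qed
  then have "act q (act (inv q \<circ> p) x) = act q x" by simp
  then show ?thesis using pa p q by (simp add: pa_comp)
qed

lemma supports_act:
  assumes pa: "perm_act act" and p: "fperm p" and s: "supports act A x"
  shows "supports act (p ` A) (act p x)"
  unfolding supports_def
proof (intro allI impI)
  fix r assume r: "fperm r \<and> (\<forall>a\<in>p ` A. r a = a)"
  have bp: "bij p" using p by (simp add: fperm_def)
  have fr: "fperm (inv p \<circ> r \<circ> p)" using r p by simp
  have "\<forall>a\<in>A. (inv p \<circ> r \<circ> p) a = a" using r bp by (simp add: bij_is_inj)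
  then have "act (inv p \<circ> r \<circ> p) x = x"
    using s fr unfolding supports_def by blast
  then have "act p (act (inv p \<circ> r \<circ> p) x) = act p x" by simp
  moreover have "act p (act (inv p \<circ> r \<circ> p) x) = act (p \<circ> (inv p \<circ> r \<circ> p)) x"
    using pa p r by (simp add: pa_comp)
  moreover have "p \<circ> (inv p \<circ> r \<circ> p) = r \<circ> p" using bp
    by (auto simp: bij_is_surj surj_f_inv_f)
  ultimately show "act r (act p x) = act p x" using pa p r by (simp add: pa_comp)
qed

lemma supp_act_sub:
  assumes pa: "perm_act act" and p: "fperm p" and f: "finite (supp act x)"
  shows "supp act (act p x) \<subseteq> p ` supp act x"
  by (rule supp_subset) (use f supports_act[OF pa p supp_supports[OF pa]] in auto)

lemma supp_act:
  assumes pa: "perm_act act" and p: "fperm p"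
  shows "supp act (act p x) = p ` supp act x"
proof (cases "finite (supp act x)")
  case True
  have bp: "bij p" using p by (simp add: fperm_def)
  have 1: "supp act (act p x) \<subseteq> p ` supp act x" by (rule supp_act_sub[OF pa p True])
  then have f2: "finite (supp act (act p x))" using True finite_subset by blast
  have "supp act (act (inv p) (act p x)) \<subseteq> inv p ` supp act (act p x)"
    by (rule supp_act_sub[OF pa _ f2]) (use p in simp)
  then have "supp act x \<subseteq> inv p ` supp act (act p x)" using pa p by simp
  then have "p ` supp act x \<subseteq> supp act (act p x)" using bp
    by (auto simp: bij_is_surj surj_f_inv_f)
  then show ?thesis using 1 by blast
next
  case False
  have "\<not> finite (supp act (act p x))"
  proof
    assume f2: "finite (supp act (act p x))"
    have "supp act (act (inv p) (act p x)) \<subseteq> inv p ` supp act (act p x)"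
      by (rule supp_act_sub[OF pa _ f2]) (use p in simp)
    then have "supp act x \<subseteq> inv p ` supp act (act p x)" using pa p by simp
    then show False using False f2 finite_subset by blast
  qed
  then show ?thesis using False supp_infinite_UNIV p
    by (metis bij_is_surj fperm_def)
qed



lemma perm_Tact[simp]: "perm_act act \<Longrightarrow> perm_act (Tact act)"
  unfolding perm_act_def Tact_def by (auto simp: image_comp)

lemma perm_absact[simp]: "perm_act act \<Longrightarrow> perm_act (absact act)"
  unfolding perm_act_def absact_def by (auto simp: image_comp case_prod_beta' o_def)

lemma perm_Fact[simp]: "perm_act act \<Longrightarrow> perm_act (Fact act)"
  unfolding perm_act_def
proof (intro conjI allI impI)
  assume pa: "(\<forall>x. act id x = x) \<and> (\<forall>p q x. fperm p \<longrightarrow> fperm q \<longrightarrow> act (p \<circ> q) x = act p (act q x))"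
  then have pa': "perm_act act" by (simp add: perm_act_def)
  fix x :: "'a F" show "Fact act id x = x"
    using perm_absact[OF pa'] pa by (cases x) (auto simp: Fact_def perm_act_def)
  fix p q :: "name \<Rightarrow> name" and y :: "'a F" assume "fperm p" "fperm q"
  then show "Fact act (p \<circ> q) y = Fact act p (Fact act q y)"
    using perm_absact[OF pa'] pa by (cases y) (auto simp: Fact_def perm_act_def)
qed

lemma supp_fin: "finite A \<Longrightarrow> supports act A x \<Longrightarrow> finite (supp act x)"
  by (rule finite_subset[OF supp_subset])

lemma fperm_notin: "fperm p \<Longrightarrow> (\<forall>a\<in>N. p a = a) \<Longrightarrow> a \<notin> N \<Longrightarrow> p a \<notin> N"
proof
  assume p: "fperm p" and fx: "\<forall>a\<in>N. p a = a" and a: "a \<notin> N" and pa: "p a \<in> N"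
  then have "p (p a) = p a" by blast
  moreover have "inj p" using p by (simp add: fperm_def bij_is_inj)
  ultimately have "p a = a" by (simp add: inj_eq)
  then show False using a pa by simp
qed

lemma supports_eqvt:
  assumes eq: "\<And>p x. fperm p \<Longrightarrow> f (act p x) = act' p (f x)" and s: "supports act A x"
  shows "supports act' A (f x)"
  unfolding supports_def
proof (intro allI impI)
  fix p assume p: "fperm p \<and> (\<forall>a\<in>A. p a = a)"
  then have "act p x = x" using s unfolding supports_def by blast
  then show "act' p (f x) = f x" using eq[of p x] p by simp
qed

lemma supp_eqvt_sub:
  assumes pa: "perm_act act" and eq: "\<And>p x. fperm p \<Longrightarrow> f (act p x) = act' p (f x)"
    and f: "finite (supp act x)"
  shows "supp act' (f x) \<subseteq> supp act x"
proof -
  have "supports act' (supp act x) (f x)"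
    by (rule supports_eqvt[where act=act and f=f]) (use eq supp_supports[OF pa] in auto)
  then show ?thesis by (rule supp_subset[OF f])
qed

lemma supp_inj_eqvt:
  assumes i: "inj f" and eq: "\<And>p x. fperm p \<Longrightarrow> f (act p x) = act' p (f x)"
  shows "supp act x \<subseteq> supp act' (f x)"
proof -
  have "supports act A x" if "supports act' A (f x)" for A
    unfolding supports_def
  proof (intro allI impI)
    fix p assume p: "fperm p \<and> (\<forall>a\<in>A. p a = a)"
    then have "act' p (f x) = f x" using that unfolding supports_def by blast
    then have "f (act p x) = f x" using eq[of p x] p by simp
    then show "act p x = x" using i by (simp add: inj_eq)
  qed
  then show ?thesis unfolding supp_def by blast
qed

lemma ufs_supports:
  assumes pa: "perm_act act" and A: "\<And>x. x \<in> S \<Longrightarrow> supp act x \<subseteq> A"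
  shows "supports (Tact act) A S"
  unfolding supports_def Tact_def
proof (intro allI impI)
  fix p assume p: "fperm p \<and> (\<forall>a\<in>A. p a = a)"
  have "act p x = x" if "x \<in> S" for x
    using fixes_supp[OF pa, of p x] p A[OF that] by blast
  then show "act p ` S = S" by (simp add: image_cong)
qed

lemma ufs_supp_sub:
  assumes pa: "perm_act act" and f: "finite (\<Union>x\<in>S. supp act x)"
  shows "supp (Tact act) S \<subseteq> (\<Union>x\<in>S. supp act x)"
  by (rule supp_subset[OF f ufs_supports[OF pa]]) auto

lemma ufs_mem_supp:
  assumes pa: "perm_act act" and f: "finite (\<Union>x\<in>S. supp act x)" and x: "x \<in> S"
  shows "supp act x \<subseteq> supp (Tact act) S"
proof
  fix a assume a: "a \<in> supp act x"
  show "a \<in> supp (Tact act) S"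
  proof (rule ccontr)
    assume na: "a \<notin> supp (Tact act) S"
    have fS: "finite (supp (Tact act) S)" using ufs_supp_sub[OF pa f] f finite_subset by blast
    obtain b where b: "b \<notin> (\<Union>x\<in>S. supp act x) \<union> supp (Tact act) S \<union> {a}"
      using fresh_ex[of "(\<Union>x\<in>S. supp act x) \<union> supp (Tact act) S \<union> {a}"] f fS by blast
    have "Tact act (swp a b) S = S" using swap_fresh[OF perm_Tact[OF pa] na, of b] b by blast
    then have "act (swp a b) x \<in> S" using x unfolding Tact_def by blast
    moreover have "b \<in> supp act (act (swp a b) x)"
      using a supp_act[OF pa fperm_swp[of a b], of x] by (force simp: swp_def)
    ultimately show False using b by blast
  qed
qed

lemma perm_swap_comm: "inj p \<Longrightarrow> p \<circ> swp a c = swp (p a) (p c) \<circ> p"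
  by (rule ext) (auto simp: swp_def dest: injD)

lemma abs_eqvt_sub:
  assumes pa: "perm_act act" and p: "fperm p"
  shows "absact act p (abs act a x) \<subseteq> abs act (p a) (act p x)"
proof
  have ip: "inj p" using p by (simp add: fperm_def bij_is_inj)
  fix z assume "z \<in> absact act p (abs act a x)"
  then obtain b y c where z: "z = (p b, act p y)" and c: "c \<noteq> a" "c \<noteq> b" "c \<notin> supp act x" "c \<notin> supp act y"
     and e: "act (swp a c) x = act (swp b c) y"
    unfolding absact_def abs_def by auto
  have "act (swp (p a) (p c)) (act p x) = act p (act (swp a c) x)"
    using pa p by (simp add: pa_comp[symmetric] perm_swap_comm[OF ip])
  also have "\<dots> = act p (act (swp b c) y)" using e by simp
  also have "\<dots> = act (swp (p b) (p c)) (act p y)"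
    using pa p by (simp add: pa_comp[symmetric] perm_swap_comm[OF ip])
  finally have "act (swp (p a) (p c)) (act p x) = act (swp (p b) (p c)) (act p y)" .
  moreover have "p c \<noteq> p a" "p c \<noteq> p b" using c ip by (auto dest: injD)
  moreover have "p c \<notin> supp act (act p x)" "p c \<notin> supp act (act p y)"
    using c ip supp_act[OF pa p] by (auto dest: injD)
  ultimately show "z \<in> abs act (p a) (act p x)" unfolding abs_def z by blast
qed

lemma abs_eqvt:
  assumes pa: "perm_act act" and p: "fperm p"
  shows "absact act p (abs act a x) = abs act (p a) (act p x)"
proof
  show "absact act p (abs act a x) \<subseteq> abs act (p a) (act p x)" by (rule abs_eqvt_sub[OF pa p])
  have bp: "bij p" using p by (simp add: fperm_def)
  have "absact act (inv p) (abs act (p a) (act p x)) \<subseteq> abs act (inv p (p a)) (act (inv p) (act p x))"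
    by (rule abs_eqvt_sub[OF pa]) (use p in simp)
  then have "absact act (inv p) (abs act (p a) (act p x)) \<subseteq> abs act a x"
    using pa p bp by (simp add: bij_is_inj)
  then have "absact act p (absact act (inv p) (abs act (p a) (act p x))) \<subseteq> absact act p (abs act a x)"
    unfolding absact_def by blast
  moreover have "absact act p (absact act (inv p) \<alpha>) = \<alpha>" for \<alpha>
    using perm_absact[OF pa] p by (metis pa_inv_r)
  ultimately show "abs act (p a) (act p x) \<subseteq> absact act p (abs act a x)" by simp
qed

lemma abs_empty: "\<not> finite (supp act x) \<Longrightarrow> abs act a x = {}"
  unfolding abs_def using supp_infinite_UNIV by fastforce



lemma abs_char:
  assumes pa: "perm_act act" and f: "finite (supp act x)"
  shows "abs act a x = {(b, y). y = act (swp a b) x \<and> (b = a \<or> b \<notin> supp act x)}"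
proof (intro set_eqI iffI)
  fix z assume "z \<in> abs act a x"
  then obtain b y c where z: "z = (b, y)" and c: "c \<noteq> a" "c \<noteq> b" "c \<notin> supp act x" "c \<notin> supp act y"
     and e: "act (swp a c) x = act (swp b c) y"
    unfolding abs_def by auto
  have "y = act (swp b c) (act (swp a c) x)" using e pa by simp
  then have y: "y = act (swp b c \<circ> swp a c) x" using pa by (simp add: pa_comp)
  have sy: "supp act y = (swp b c \<circ> swp a c) ` supp act x"
    using y supp_act[OF pa, of "swp b c \<circ> swp a c" x] by simp
  show "z \<in> {(b, y). y = act (swp a b) x \<and> (b = a \<or> b \<notin> supp act x)}"
  proof (cases "b = a")
    case True
    then show ?thesis using y z pa by simp
  next
    case False
    have bx: "b \<notin> supp act x"
    proof
      assume "b \<in> supp act x"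
      then have "(swp b c \<circ> swp a c) b \<in> supp act y" using sy by blast
      then show False using c False by (simp add: swp_def)
    qed
    have "y = act (swp a b) x" unfolding y
      by (rule act_agree[OF pa]) (use bx c in \<open>auto simp: swp_def\<close>)
    then show ?thesis using z bx by simp
  qed
next
  fix z assume "z \<in> {(b, y). y = act (swp a b) x \<and> (b = a \<or> b \<notin> supp act x)}"
  then obtain b y where z: "z = (b, y)" and y: "y = act (swp a b) x" and b: "b = a \<or> b \<notin> supp act x"
    by auto
  obtain c where c: "c \<notin> supp act x \<union> {a, b}" using fresh_ex[of "supp act x \<union> {a, b}"] f by blast
  have cy: "c \<notin> supp act y" using c supp_act[OF pa, of "swp a b" x] y by (auto simp: swp_def)
  have "act (swp b c) y = act (swp b c \<circ> swp a b) x" using y pa by (simp add: pa_comp)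
  also have "\<dots> = act (swp a c) x"
    by (rule act_agree[OF pa]) (use b c in \<open>auto simp: swp_def\<close>)
  finally show "z \<in> abs act a x" unfolding abs_def z using c cy by auto
qed

lemma abs_self: "perm_act act \<Longrightarrow> finite (supp act x) \<Longrightarrow> (a, x) \<in> abs act a x"
  by (simp add: abs_char)

lemma abs_eq_iff:
  assumes pa: "perm_act act" and f: "finite (supp act x)"
  shows "abs act a x = abs act b y \<longleftrightarrow> y = act (swp a b) x \<and> (b = a \<or> b \<notin> supp act x)"
proof
  assume e: "abs act a x = abs act b y"
  have fy: "finite (supp act y)"
  proof (rule ccontr)
    assume "\<not> finite (supp act y)"
    then have "abs act b y = {}" by (rule abs_empty)
    then show False using e abs_self[OF pa f, of a] by blast
  qed
  have "(b, y) \<in> abs act a x" using e abs_self[OF pa fy] by simp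
  then show "y = act (swp a b) x \<and> (b = a \<or> b \<notin> supp act x)" using abs_char[OF pa f] by simp
next
  assume h: "y = act (swp a b) x \<and> (b = a \<or> b \<notin> supp act x)"
  show "abs act a x = abs act b y"
  proof (cases "b = a")
    case True then show ?thesis using h pa by simp
  next
    case False
    then have y: "y = act (swp a b) x" and bx: "b \<notin> supp act x" using h by auto
    have sy: "supp act y = swp a b ` supp act x" using y supp_act[OF pa] by simp
    have fy: "finite (supp act y)" using sy f by simp
    have cond: "(d = a \<or> d \<notin> supp act x) \<longleftrightarrow> (d = b \<or> d \<notin> supp act y)" for d
    proof -
      have "d \<in> supp act y \<longleftrightarrow> swp a b d \<in> supp act x"
        unfolding sy by (metis image_iff swp_swp)
      then show ?thesis using bx False by (auto simp: swp_def)
    qed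
    have val: "act (swp a d) x = act (swp b d) y" if "d = a \<or> d \<notin> supp act x" for d
    proof -
      have "act (swp b d) y = act (swp b d \<circ> swp a b) x" using y pa by (simp add: pa_comp)
      also have "\<dots> = act (swp a d) x"
        by (rule act_agree[OF pa]) (use that bx False in \<open>auto simp: swp_def\<close>)
      finally show ?thesis by simp
    qed
    show ?thesis unfolding abs_char[OF pa f] abs_char[OF pa fy]
      using cond val by auto
  qed
qed

lemma abs_supports:
  assumes pa: "perm_act act" and f: "finite (supp act x)"
  shows "supports (absact act) (supp act x - {b}) (abs act b x)"
  unfolding supports_def
proof (intro allI impI)
  fix p assume p: "fperm p \<and> (\<forall>a\<in>supp act x - {b}. p a = a)"
  have ip: "inj p" using p by (simp add: fperm_def bij_is_inj)
  have pb: "p b = b \<or> p b \<notin> supp act x"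
  proof (rule ccontr)
    assume "\<not> (p b = b \<or> p b \<notin> supp act x)"
    then have "p b \<noteq> b" "p b \<in> supp act x" by auto
    then have "p (p b) = p b" using p by auto
    then show False using \<open>p b \<noteq> b\<close> ip by (simp add: inj_eq)
  qed
  have "act p x = act (swp b (p b)) x"
    by (rule act_agree[OF pa]) (use p pb in \<open>auto simp: swp_def\<close>)
  then have "abs act b x = abs act (p b) (act p x)"
    using abs_eq_iff[OF pa f, of b "p b" "act p x"] pb by auto
  then show "absact act p (abs act b x) = abs act b x"
    using abs_eqvt[OF pa, of p b x] p by simp
qed

lemma abs_supp_fin:
  assumes pa: "perm_act act" and f: "finite (supp act x)"
  shows "finite (supp (absact act) (abs act b x))"
  using supp_fin[OF _ abs_supports[OF pa f]] f by simp

lemma abs_supp_ge: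
  assumes pa: "perm_act act" and f: "finite (supp act x)"
  shows "supp act x - {b} \<subseteq> supp (absact act) (abs act b x)"
proof
  fix c assume c: "c \<in> supp act x - {b}"
  show "c \<in> supp (absact act) (abs act b x)"
  proof (rule ccontr)
    assume nc: "c \<notin> supp (absact act) (abs act b x)"
    have fa: "finite (supp (absact act) (abs act b x))" by (rule abs_supp_fin[OF pa f])
    obtain d where d: "d \<notin> supp (absact act) (abs act b x) \<union> supp act x \<union> {b, c}"
      using fresh_ex[of "supp (absact act) (abs act b x) \<union> supp act x \<union> {b, c}"] fa f by blast
    have "absact act (swp c d) (abs act b x) = abs act b x"
      using swap_fresh[OF perm_absact[OF pa] nc, of d] d by blast
    then have "abs act b (act (swp c d) x) = abs act b x"
      using abs_eqvt[OF pa fperm_swp, of c d b x] c d by (simp add: swp_def)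
    then have "act (swp c d) x = x"
      using abs_eq_iff[OF pa f, of b b "act (swp c d) x"] pa by (metis pa_id swp_same)
    then have "supp act x = swp c d ` supp act x" using supp_act[OF pa fperm_swp, of c d x] by simp
    then have "swp c d c \<in> supp act x" using c by blast
    then show False using d by (simp add: swp_def)
  qed
qed

lemma absmap_abs:
  assumes pa: "perm_act act" and pa': "perm_act act'"
    and eq: "\<And>p x. fperm p \<Longrightarrow> f (act p x) = act' p (f x)" and fx: "finite (supp act x)"
  shows "absmap act' f (abs act a x) = abs act' a (f x)"
proof -
  define z where "z = (SOME z. z \<in> abs act a x)"
  have "z \<in> abs act a x" unfolding z_def using abs_self[OF pa fx] by (rule someI)
  then obtain b y where z: "z = (b, y)" and y: "y = act (swp a b) x" and b: "b = a \<or> b \<notin> supp act x"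
    using abs_char[OF pa fx] by auto
  have sf: "supp act' (f x) \<subseteq> supp act x" by (rule supp_eqvt_sub[where act=act and act'=act' and f=f, OF pa eq fx])
  have ff: "finite (supp act' (f x))" using sf fx finite_subset by blast
  have "f y = act' (swp a b) (f x)" using y eq by simp
  then have "abs act' a (f x) = abs act' b (f y)"
    using abs_eq_iff[OF pa' ff, of a b "f y"] b sf by auto
  then show ?thesis unfolding absmap_def Let_def z_def[symmetric] z by simp
qed



lemma U_eqvt:
  assumes pa: "perm_act act" and pa2: "perm_act act2"
    and heq: "\<And>p \<alpha>. fperm p \<Longrightarrow> act2 p (h \<alpha>) = h (absact act p \<alpha>)" and p: "fperm p"
  shows "Tact act p {s. h (abs act a s) \<in> Z} = {s. h (abs act (p a) s) \<in> Tact act2 p Z}"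
proof (intro set_eqI iffI)
  fix s assume "s \<in> Tact act p {s. h (abs act a s) \<in> Z}"
  then obtain s' where s: "s = act p s'" and s': "h (abs act a s') \<in> Z" unfolding Tact_def by auto
  have "h (abs act (p a) s) = act2 p (h (abs act a s'))"
    using heq[OF p] abs_eqvt[OF pa p] s by simp
  then show "s \<in> {s. h (abs act (p a) s) \<in> Tact act2 p Z}" using s' unfolding Tact_def by auto
next
  fix s assume "s \<in> {s. h (abs act (p a) s) \<in> Tact act2 p Z}"
  then obtain w where w: "w \<in> Z" and e: "h (abs act (p a) s) = act2 p w" unfolding Tact_def by auto
  define s' where "s' = act (inv p) s"
  have s: "s = act p s'" unfolding s'_def using pa p by simp
  have "act2 p (h (abs act a s')) = h (abs act (p a) s)"
    using heq[OF p] abs_eqvt[OF pa p] s by simp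
  then have "act2 p (h (abs act a s')) = act2 p w" using e by simp
  then have "h (abs act a s') = w" using pa_inj[OF pa2 p] by blast
  then show "s \<in> Tact act p {s. h (abs act a s) \<in> Z}" using w s unfolding Tact_def by auto
qed

lemma U_supports:
  assumes pa: "perm_act act" and pa2: "perm_act act2"
    and heq: "\<And>p \<alpha>. fperm p \<Longrightarrow> act2 p (h \<alpha>) = h (absact act p \<alpha>)"
  shows "supports (Tact act) (supp (Tact act2) Z \<union> {a}) {s. h (abs act a s) \<in> Z}"
  unfolding supports_def
proof (intro allI impI)
  fix p assume p: "fperm p \<and> (\<forall>b\<in>supp (Tact act2) Z \<union> {a}. p b = b)"
  have "Tact act2 p Z = Z" using fixes_supp[OF perm_Tact[OF pa2], of p Z] p by blast
  moreover have "p a = a" using p by blast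
  ultimately show "Tact act p {s. h (abs act a s) \<in> Z} = {s. h (abs act a s) \<in> Z}"
    using U_eqvt[OF pa pa2 heq, of p a Z] p by simp
qed

lemma U_supp_sub:
  assumes pa: "perm_act act" and pa2: "perm_act act2"
    and heq: "\<And>p \<alpha>. fperm p \<Longrightarrow> act2 p (h \<alpha>) = h (absact act p \<alpha>)"
    and fZ: "finite (supp (Tact act2) Z)"
  shows "supp (Tact act) {s. h (abs act a s) \<in> Z} \<subseteq> supp (Tact act2) Z \<union> {a}"
  by (rule supp_subset[OF _ U_supports[OF pa pa2 heq]]) (use fZ in simp)

lemma U_supp_fin:
  assumes pa: "perm_act act" and pa2: "perm_act act2"
    and heq: "\<And>p \<alpha>. fperm p \<Longrightarrow> act2 p (h \<alpha>) = h (absact act p \<alpha>)"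
    and fZ: "finite (supp (Tact act2) Z)"
  shows "finite (supp (Tact act) {s. h (abs act a s) \<in> Z})"
  using U_supp_sub[OF pa pa2 heq fZ, of a] fZ finite_subset by blast

lemma U_indep:
  assumes pa: "perm_act act" and pa2: "perm_act act2"
    and heq: "\<And>p \<alpha>. fperm p \<Longrightarrow> act2 p (h \<alpha>) = h (absact act p \<alpha>)"
    and fZ: "finite (supp (Tact act2) Z)"
    and a: "a \<notin> supp (Tact act2) Z" and b: "b \<notin> supp (Tact act2) Z"
  shows "abs (Tact act) a {s. h (abs act a s) \<in> Z} = abs (Tact act) b {s. h (abs act b s) \<in> Z}"
proof -
  have "Tact act2 (swp a b) Z = Z" using swap_fresh[OF perm_Tact[OF pa2] a b] .
  then have e: "{s. h (abs act b s) \<in> Z} = Tact act (swp a b) {s. h (abs act a s) \<in> Z}"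
    using U_eqvt[OF pa pa2 heq fperm_swp, of a b a Z] by (simp add: swp_def)
  have "b = a \<or> b \<notin> supp (Tact act) {s. h (abs act a s) \<in> Z}"
    using U_supp_sub[OF pa pa2 heq fZ, of a] b by blast
  then show ?thesis
    using abs_eq_iff[OF perm_Tact[OF pa] U_supp_fin[OF pa pa2 heq fZ, of a], of a b] e by blast
qed

lemma FAbs_eqvt: "Fact act p (FAbs \<alpha>) = FAbs (absact act p \<alpha>)"
  by (simp add: Fact_def)

lemma eps_expand:
  assumes pa: "perm_act act" and fS: "finite (supp (Tact (Fact act)) S)"
    and a0: "a0 \<notin> supp (Tact (Fact act)) S"
  shows "eps act S = (FStar \<in> S, \<lambda>a. {s. FPair a s \<in> S}, abs (Tact act) a0 {s. FAbs (abs act a0 s) \<in> S})"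
proof -
  define a where "a = (SOME a. a \<notin> supp (Tact (Fact act)) S)"
  have a: "a \<notin> supp (Tact (Fact act)) S" unfolding a_def
    using fresh_ex[OF fS] by (rule someI_ex)
  have "abs (Tact act) a {s. FAbs (abs act a s) \<in> S} = abs (Tact act) a0 {s. FAbs (abs act a0 s) \<in> S}"
    by (rule U_indep[OF pa perm_Fact[OF pa] FAbs_eqvt fS a a0])
  then show ?thesis unfolding eps_def Let_def a_def[symmetric] by simp
qed

lemma rho_expand:
  assumes pa: "perm_act act"
    and fP: "finite (supp (Tact (absact act)) ((\<lambda>g. snd (snd g)) ` S))"
    and a0: "a0 \<notin> supp (Tact (absact act)) ((\<lambda>g. snd (snd g)) ` S)"
  shows "rho act S = (True \<in> fst ` S, \<lambda>a. {f a | f. f \<in> (\<lambda>g. fst (snd g)) ` S},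
            abs (Tact act) a0 {s. abs act a0 s \<in> (\<lambda>g. snd (snd g)) ` S})"
proof -
  define P where "P = (\<lambda>g. snd (snd g)) ` S"
  define a where "a = (SOME a. a \<notin> supp (Tact (absact act)) P)"
  have a: "a \<notin> supp (Tact (absact act)) P" unfolding a_def
    using fresh_ex[OF fP[folded P_def]] by (rule someI_ex)
  have "abs (Tact act) a {s. (\<lambda>x. x) (abs act a s) \<in> P} = abs (Tact act) a0 {s. (\<lambda>x. x) (abs act a0 s) \<in> P}"
    by (rule U_indep[OF pa perm_absact[OF pa] _ fP[folded P_def] a a0[folded P_def]]) simp
  then show ?thesis unfolding rho_def Let_def P_def[symmetric] a_def[symmetric] by simp
qed



lemma ufs_fin_mem: "finite (\<Union>x\<in>T. supp act x) \<Longrightarrow> x \<in> T \<Longrightarrow> finite (supp act x)"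
  by (meson UN_upper finite_subset)

lemma ufs_act:
  assumes pa: "perm_act act" and f: "finite (\<Union>x\<in>T. supp act x)" and p: "fperm p"
  shows "finite (\<Union>x\<in>Tact act p T. supp act x)"
proof -
  have "(\<Union>x\<in>Tact act p T. supp act x) = p ` (\<Union>x\<in>T. supp act x)"
    unfolding Tact_def using supp_act[OF pa p] by auto
  then show ?thesis using f by simp
qed

lemma lam_FAbs:
  assumes pa: "perm_act act" and f: "finite (\<Union>x\<in>T. supp act x)"
  shows "lam act (FAbs (abs (Tact act) b T)) = {FAbs (abs act b s) | s. s \<in> T}"
proof -
  have pT: "perm_act (Tact act)" using pa by simp
  have fT: "finite (supp (Tact act) T)" using ufs_supp_sub[OF pa f] f finite_subset by blast
  define z where "z = (SOME z. z \<in> abs (Tact act) b T)"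
  have "z \<in> abs (Tact act) b T" unfolding z_def using abs_self[OF pT fT] by (rule someI)
  then obtain c T' where z: "z = (c, T')" and T': "T' = Tact act (swp b c) T"
    and c: "c = b \<or> c \<notin> supp (Tact act) T"
    using abs_char[OF pT fT] by auto
  have key: "abs act c (act (swp b c) s) = abs act b s" if s: "s \<in> T" for s
  proof -
    have fs: "finite (supp act s)" using ufs_fin_mem[OF f s] .
    have "c = b \<or> c \<notin> supp act s" using c ufs_mem_supp[OF pa f s] by blast
    then show ?thesis using abs_eq_iff[OF pa fs, of b c "act (swp b c) s"] by simp
  qed
  have "lam act (FAbs (abs (Tact act) b T)) = {FAbs (abs act c s) | s. s \<in> T'}"
    unfolding lam_def Let_def by (simp add: z_def[symmetric] z)
  also have "\<dots> = {FAbs (abs act b s) | s. s \<in> T}"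
    unfolding T' Tact_def using key by auto
  finally show ?thesis .
qed

lemma lam_eqvt_FAbs:
  assumes pa: "perm_act act" and f: "finite (\<Union>x\<in>T. supp act x)" and p: "fperm p"
  shows "Tact (Fact act) p (lam act (FAbs (abs (Tact act) b T)))
       = lam act (Fact (Tact act) p (FAbs (abs (Tact act) b T)))"
proof -
  have "Fact (Tact act) p (FAbs (abs (Tact act) b T)) = FAbs (abs (Tact act) (p b) (Tact act p T))"
    using abs_eqvt[OF perm_Tact[OF pa] p] by (simp add: Fact_def)
  moreover have "lam act (FAbs (abs (Tact act) (p b) (Tact act p T))) = {FAbs (abs act (p b) s) | s. s \<in> Tact act p T}"
    by (rule lam_FAbs[OF pa ufs_act[OF pa f p]])
  moreover have "Tact (Fact act) p (lam act (FAbs (abs (Tact act) b T))) = {FAbs (abs act (p b) s) | s. s \<in> Tact act p T}"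
    unfolding lam_FAbs[OF pa f] Tact_def using abs_eqvt[OF pa p]
    by (simp add: Fact_def Setcompr_eq_image image_comp o_def)
  ultimately show ?thesis by simp
qed

lemma lam_eqvt:
  assumes pa: "perm_act act" and t: "t \<in> Fc (Tc X act) (Tact act)" and p: "fperm p"
  shows "Tact (Fact act) p (lam act t) = lam act (Fact (Tact act) p t)"
  using t
proof (cases t)
  case FStar then show ?thesis by (simp add: lam_def Fact_def Tact_def)
next
  case (FPair a T) then show ?thesis by (simp add: lam_def Fact_def Tact_def Setcompr_eq_image image_comp o_def)
next
  case (FAbs \<alpha>)
  then obtain b T where "\<alpha> = abs (Tact act) b T" "T \<in> Tc X act" using t by (auto simp: Fc_def)
  then show ?thesis using lam_eqvt_FAbs[OF pa _ p, of T b] FAbs by (simp add: Tc_def)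
qed



lemma Fc_cases:
  assumes "t \<in> Fc (Tc X act) (Tact act)"
  obtains "t = FStar" | a T where "t = FPair a T"
    | b T where "t = FAbs (abs (Tact act) b T)" "finite (\<Union>x\<in>T. supp act x)"
  using assms unfolding Fc_def Tc_def by blast

lemma lam_FStar: "lam act FStar = {FStar}" by (simp add: lam_def)
lemma lam_FPair: "lam act (FPair a T) = {FPair a x | x. x \<in> T}" by (simp add: lam_def)

lemma part1:
  assumes pa: "perm_act act" and S: "S \<in> Tc (Fc (Tc X act) (Tact act)) (Fact (Tact act))"
  shows "eps act (\<Union> (lam act ` S)) = Gmap \<Union> (Tact act) (eps (Tact act) S)"
proof -
  let ?A = "Fact (Tact act)"
  have pT: "perm_act (Tact act)" using pa by simp
  have pTT: "perm_act (Tact (Tact act))" using pa by simp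
  have pA: "perm_act ?A" using pa by simp
  have pF: "perm_act (Fact act)" using pa by simp
  define N where "N = (\<Union>t\<in>S. supp ?A t)"
  have Ssub: "S \<subseteq> Fc (Tc X act) (Tact act)" and fN: "finite N"
    using S unfolding Tc_def N_def by auto
  have tN: "supp ?A t \<subseteq> N" if "t \<in> S" for t using that unfolding N_def by blast
  have fS: "finite (supp (Tact ?A) S)"
    using ufs_supp_sub[OF pA] fN unfolding N_def by (meson finite_subset)
  define Z where "Z = \<Union> (lam act ` S)"
  have supZ: "supports (Tact (Fact act)) N Z"
    unfolding supports_def
  proof (intro allI impI)
    fix p assume p: "fperm p \<and> (\<forall>a\<in>N. p a = a)"
    have fix_t: "?A p t = t" if "t \<in> S" for t
      by (rule fixes_supp[OF pA]) (use p tN[OF that] in auto)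
    have "Tact (Fact act) p Z = (\<Union>t\<in>S. Tact (Fact act) p (lam act t))"
      unfolding Z_def Tact_def by (simp add: image_UN)
    also have "\<dots> = (\<Union>t\<in>S. lam act t)"
      using lam_eqvt[OF pa _ _] Ssub p fix_t by (intro SUP_cong) auto
    finally show "Tact (Fact act) p Z = Z" unfolding Z_def by simp
  qed
  have fZ: "finite (supp (Tact (Fact act)) Z)" by (rule supp_fin[OF fN supZ])
  obtain a0 where a0: "a0 \<notin> N \<union> supp (Tact (Fact act)) Z \<union> supp (Tact ?A) S"
    using fresh_ex[of "N \<union> supp (Tact (Fact act)) Z \<union> supp (Tact ?A) S"] fN fZ fS by blast
  define Y where "Y = {T. FAbs (abs (Tact act) a0 T) \<in> S}"
  have L: "eps act Z = (FStar \<in> Z, \<lambda>a. {s. FPair a s \<in> Z}, abs (Tact act) a0 {s. FAbs (abs act a0 s) \<in> Z})"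
    by (rule eps_expand[OF pa fZ]) (use a0 in blast)
  have R: "eps (Tact act) S = (FStar \<in> S, \<lambda>a. {T. FPair a T \<in> S}, abs (Tact (Tact act)) a0 Y)"
    unfolding Y_def by (rule eps_expand[OF pT fS]) (use a0 in blast)
  have fY: "finite (supp (Tact (Tact act)) Y)"
    unfolding Y_def by (rule U_supp_fin[OF pT pA FAbs_eqvt fS])
  have eqU: "\<Union> (Tact (Tact act) p x) = Tact act p (\<Union> x)" for p x
    by (simp add: Tact_def image_Union)
  have AM: "absmap (Tact act) \<Union> (abs (Tact (Tact act)) a0 Y) = abs (Tact act) a0 (\<Union> Y)"
    by (rule absmap_abs[OF pTT pT eqU fY])
  have c1: "(FStar \<in> Z) = (FStar \<in> S)"
  proof
    assume "FStar \<in> Z"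
    then obtain t where t: "t \<in> S" "FStar \<in> lam act t" unfolding Z_def by blast
    then have "t \<in> Fc (Tc X act) (Tact act)" using Ssub by blast
    then show "FStar \<in> S"
    proof (cases rule: Fc_cases)
      case 1 then show ?thesis using t by simp
    next
      case (2 a T) then show ?thesis using t by (auto simp: lam_FPair)
    next
      case (3 b T) then show ?thesis using t lam_FAbs[OF pa, of T b] by auto
    qed
  next
    assume "FStar \<in> S" then show "FStar \<in> Z" unfolding Z_def by (force simp: lam_FStar)
  qed
  have c2: "{s. FPair a s \<in> Z} = \<Union> {T. FPair a T \<in> S}" for a
  proof (intro set_eqI iffI)
    fix s assume "s \<in> {s. FPair a s \<in> Z}"
    then obtain t where t: "t \<in> S" "FPair a s \<in> lam act t" unfolding Z_def by blast
    then have "t \<in> Fc (Tc X act) (Tact act)" using Ssub by blast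
    then show "s \<in> \<Union> {T. FPair a T \<in> S}"
    proof (cases rule: Fc_cases)
      case 1 then show ?thesis using t by (simp add: lam_FStar)
    next
      case (2 a T) then show ?thesis using t by (auto simp: lam_FPair)
    next
      case (3 b T) then show ?thesis using t lam_FAbs[OF pa, of T b] by auto
    qed
  next
    fix s assume "s \<in> \<Union> {T. FPair a T \<in> S}"
    then obtain T where "FPair a T \<in> S" "s \<in> T" by blast
    then show "s \<in> {s. FPair a s \<in> Z}" unfolding Z_def by (force simp: lam_FPair)
  qed
  have c3: "{s. FAbs (abs act a0 s) \<in> Z} = \<Union> Y"
  proof (intro set_eqI iffI)
    fix s assume "s \<in> {s. FAbs (abs act a0 s) \<in> Z}"
    then obtain t where t: "t \<in> S" "FAbs (abs act a0 s) \<in> lam act t" unfolding Z_def by blast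
    then have "t \<in> Fc (Tc X act) (Tact act)" using Ssub by blast
    then show "s \<in> \<Union> Y"
    proof (cases rule: Fc_cases)
      case 1 then show ?thesis using t by (simp add: lam_FStar)
    next
      case (2 a T) then show ?thesis using t by (auto simp: lam_FPair)
    next
      case (3 b T)
      have fT: "finite (supp (Tact act) T)" using ufs_supp_sub[OF pa 3(2)] 3(2) finite_subset by blast
      obtain s' where s': "s' \<in> T" "abs act a0 s = abs act b s'"
        using t 3 lam_FAbs[OF pa 3(2), of b] by auto
      have fs': "finite (supp act s')" by (rule ufs_fin_mem[OF 3(2) s'(1)])
      have s_eq: "s = act (swp b a0) s'" and "a0 = b \<or> a0 \<notin> supp act s'"
        using abs_eq_iff[OF pa fs', of b a0 s] s'(2) by auto
      have "supp (absact (Tact act)) (abs (Tact act) b T) \<subseteq> supp ?A t"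
        unfolding 3(1) by (rule supp_inj_eqvt) (auto simp: inj_def FAbs_eqvt)
      moreover have "supp (Tact act) T - {b} \<subseteq> supp (absact (Tact act)) (abs (Tact act) b T)"
        by (rule abs_supp_ge[OF pT fT])
      ultimately have ab: "a0 = b \<or> a0 \<notin> supp (Tact act) T" using a0 tN[OF t(1)] by blast
      define T' where "T' = Tact act (swp b a0) T"
      have "abs (Tact act) b T = abs (Tact act) a0 T'"
        using abs_eq_iff[OF pT fT, of b a0 T'] ab unfolding T'_def by simp
      then have "T' \<in> Y" using t(1) 3(1) unfolding Y_def by simp
      moreover have "s \<in> T'" unfolding T'_def Tact_def s_eq using s'(1) by blast
      ultimately show ?thesis by blast
    qed
  next
    fix s assume "s \<in> \<Union> Y"
    then obtain T where T: "FAbs (abs (Tact act) a0 T) \<in> S" "s \<in> T" unfolding Y_def by blast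
    then have "FAbs (abs (Tact act) a0 T) \<in> Fc (Tc X act) (Tact act)" using Ssub by blast
    then show "s \<in> {s. FAbs (abs act a0 s) \<in> Z}"
    proof (cases rule: Fc_cases)
      case 1 then show ?thesis by simp
    next
      case (2 a T) then show ?thesis by simp
    next
      case (3 b T'')
      have fT'': "finite (supp (Tact act) T'')" using ufs_supp_sub[OF pa 3(2)] 3(2) finite_subset by blast
      have "T = Tact act (swp b a0) T''"
        using abs_eq_iff[OF pT fT'', of b a0 T] 3(1) by simp
      then have fTT: "finite (\<Union>x\<in>T. supp act x)" using ufs_act[OF pa 3(2)] by simp
      have "FAbs (abs act a0 s) \<in> lam act (FAbs (abs (Tact act) a0 T))"
        using lam_FAbs[OF pa fTT, of a0] T(2) by blast
      then show ?thesis using T(1) unfolding Z_def by blast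
    qed
  qed
  show ?thesis
    unfolding Z_def[symmetric] L R Gmap_def using AM c1 c2 c3 by (simp add: o_def)
qed

lemma eps_fst: "fst (eps act s) = (FStar \<in> s)" by (simp add: eps_def Let_def)
lemma eps_snd_fst: "fst (snd (eps act s)) = (\<lambda>a. {x. FPair a x \<in> s})" by (simp add: eps_def Let_def)

lemma part2:
  assumes pa: "perm_act act" and S: "S \<in> Tc (Tc (Fc X act) (Fact act)) (Tact (Fact act))"
  shows "eps act (\<Union> S) = Gmap \<Union> (Tact act) (rho (Tact act) (eps act ` S))"
proof -
  let ?B = "Tact (Fact act)"
  have pT: "perm_act (Tact act)" using pa by simp
  have pTT: "perm_act (Tact (Tact act))" using pa by simp
  have pF: "perm_act (Fact act)" using pa by simp
  have pB: "perm_act ?B" using pa by simp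
  have pAT: "perm_act (absact (Tact act))" using pa by simp
  define N where "N = (\<Union>s\<in>S. supp ?B s)"
  have fN: "finite N" using S unfolding Tc_def N_def by auto
  have sN: "supp ?B s \<subseteq> N" if "s \<in> S" for s using that unfolding N_def by blast
  have fs: "finite (supp ?B s)" if "s \<in> S" for s using sN[OF that] fN finite_subset by blast
  define Z where "Z = \<Union> S"
  have supZ: "supports ?B N Z"
    unfolding supports_def
  proof (intro allI impI)
    fix p assume p: "fperm p \<and> (\<forall>a\<in>N. p a = a)"
    have fix_s: "?B p s = s" if "s \<in> S" for s
      by (rule fixes_supp[OF pB]) (use p sN[OF that] in auto)
    have "?B p Z = (\<Union>s\<in>S. ?B p s)" unfolding Z_def Tact_def by (simp add: image_Union)
    also have "\<dots> = \<Union> S" using fix_s by simp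
    finally show "?B p Z = Z" unfolding Z_def .
  qed
  have fZ: "finite (supp ?B Z)" by (rule supp_fin[OF fN supZ])
  define P where "P = (\<lambda>g. snd (snd g)) ` (eps act ` S)"
  have Pa: "P = (\<lambda>s. abs (Tact act) a {x. FAbs (abs act a x) \<in> s}) ` S" if a: "a \<notin> N" for a
  proof -
    have e: "snd (snd (eps act s)) = abs (Tact act) a {x. FAbs (abs act a x) \<in> s}" if "s \<in> S" for s
    proof -
      have "a \<notin> supp ?B s" using a sN[OF that] by blast
      then show ?thesis using eps_expand[OF pa fs[OF that], of a] by simp
    qed
    show ?thesis unfolding P_def image_image by (rule image_cong[OF refl e])
  qed
  obtain a1 where a1: "a1 \<notin> N" using fresh_ex[OF fN] by blast
  have supP: "supports (Tact (absact (Tact act))) N P"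
    unfolding supports_def
  proof (intro allI impI)
    fix p assume p: "fperm p \<and> (\<forall>a\<in>N. p a = a)"
    have fp: "fperm p" using p by blast
    have pa1: "p a1 \<notin> N" using fperm_notin[OF fp _ a1] p by blast
    have e: "absact (Tact act) p (abs (Tact act) a1 {x. FAbs (abs act a1 x) \<in> s})
             = abs (Tact act) a1 {x. FAbs (abs act a1 x) \<in> s}" if s: "s \<in> S" for s
    proof -
      have fix_s: "?B p s = s" by (rule fixes_supp[OF pB]) (use p sN[OF s] in auto)
      have "absact (Tact act) p (abs (Tact act) a1 {x. FAbs (abs act a1 x) \<in> s})
          = abs (Tact act) (p a1) (Tact act p {x. FAbs (abs act a1 x) \<in> s})"
        by (rule abs_eqvt[OF pT fp])
      also have "\<dots> = abs (Tact act) (p a1) {x. FAbs (abs act (p a1) x) \<in> s}"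
        using U_eqvt[OF pa pF FAbs_eqvt fp, of a1 s] fix_s by simp
      also have "\<dots> = abs (Tact act) a1 {x. FAbs (abs act a1 x) \<in> s}"
        by (rule U_indep[OF pa pF FAbs_eqvt fs[OF s]]) (use pa1 a1 sN[OF s] in blast)+
      finally show ?thesis .
    qed
    show "Tact (absact (Tact act)) p P = P"
      unfolding Pa[OF a1] Tact_def[of "absact (Tact act)"] image_image by (rule image_cong[OF refl e])
  qed
  have fP: "finite (supp (Tact (absact (Tact act))) P)" by (rule supp_fin[OF fN supP])
  obtain a0 where a0: "a0 \<notin> N \<union> supp ?B Z \<union> supp (Tact (absact (Tact act))) P"
    using fresh_ex[of "N \<union> supp ?B Z \<union> supp (Tact (absact (Tact act))) P"] fN fZ fP by blast
  define W where "W = {Y. abs (Tact act) a0 Y \<in> P}"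
  have L: "eps act Z = (FStar \<in> Z, \<lambda>a. {s. FPair a s \<in> Z}, abs (Tact act) a0 {s. FAbs (abs act a0 s) \<in> Z})"
    by (rule eps_expand[OF pa fZ]) (use a0 in blast)
  have R: "rho (Tact act) (eps act ` S) = (True \<in> fst ` (eps act ` S),
      \<lambda>a. {f a | f. f \<in> (\<lambda>g. fst (snd g)) ` (eps act ` S)}, abs (Tact (Tact act)) a0 W)"
    unfolding W_def P_def by (rule rho_expand[OF pT fP[unfolded P_def]]) (use a0 P_def in blast)
  have fW: "finite (supp (Tact (Tact act)) W)"
    using U_supp_fin[OF pT pAT, of "\<lambda>x. x" P a0] fP unfolding W_def by simp
  have eqU: "\<Union> (Tact (Tact act) p x) = Tact act p (\<Union> x)" for p x
    by (simp add: Tact_def image_Union)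
  have AM: "absmap (Tact act) \<Union> (abs (Tact (Tact act)) a0 W) = abs (Tact act) a0 (\<Union> W)"
    by (rule absmap_abs[OF pTT pT eqU fW])
  have c1: "(FStar \<in> Z) = (True \<in> fst ` (eps act ` S))"
    unfolding Z_def image_comp by (auto simp: eps_fst)
  have c2: "{s. FPair a s \<in> Z} = \<Union> {f a | f. f \<in> (\<lambda>g. fst (snd g)) ` (eps act ` S)}" for a
    unfolding Z_def image_comp by (auto simp: eps_snd_fst)
  have W_eq: "W = (\<lambda>s. {x. FAbs (abs act a0 x) \<in> s}) ` S"
  proof -
    have "abs (Tact act) a0 Y = abs (Tact act) a0 {x. FAbs (abs act a0 x) \<in> s}
        \<longleftrightarrow> Y = {x. FAbs (abs act a0 x) \<in> s}" (is "?l \<longleftrightarrow> ?r") if s: "s \<in> S" for s Y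
    proof -
      have "?l \<longleftrightarrow> abs (Tact act) a0 {x. FAbs (abs act a0 x) \<in> s} = abs (Tact act) a0 Y"
        by (rule eq_commute)
      also have "\<dots> \<longleftrightarrow> ?r"
        using abs_eq_iff[OF pT U_supp_fin[OF pa pF FAbs_eqvt fs[OF s], of a0], of a0 a0 Y] pT by simp
      finally show ?thesis .
    qed
    note eqv = this
    have Pa0: "P = (\<lambda>s. abs (Tact act) a0 {x. FAbs (abs act a0 x) \<in> s}) ` S"
      using Pa a0 by blast
    show ?thesis
    proof (intro set_eqI iffI)
      fix Y assume "Y \<in> W"
      then obtain s where s: "s \<in> S" "abs (Tact act) a0 Y = abs (Tact act) a0 {x. FAbs (abs act a0 x) \<in> s}"
        unfolding W_def Pa0 by blast
      then have "Y = {x. FAbs (abs act a0 x) \<in> s}" using eqv by blast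
      then show "Y \<in> (\<lambda>s. {x. FAbs (abs act a0 x) \<in> s}) ` S" using s(1) by blast
    next
      fix Y assume "Y \<in> (\<lambda>s. {x. FAbs (abs act a0 x) \<in> s}) ` S"
      then obtain s where "s \<in> S" "Y = {x. FAbs (abs act a0 x) \<in> s}" by blast
      then show "Y \<in> W" unfolding W_def Pa0 by blast
    qed
  qed
  have c3: "{s. FAbs (abs act a0 s) \<in> Z} = \<Union> W"
    unfolding W_eq Z_def by (rule set_eqI) simp
  show ?thesis
    unfolding Z_def[symmetric] L R Gmap_def using AM c1 c2 c3 by (simp add: o_def)
qed

theorem lemma4p20:
  fixes X :: "'x set" and act :: "(name \<Rightarrow> name) \<Rightarrow> 'x \<Rightarrow> 'x"
  assumes "nominal_set X act"
  shows "(\<forall>S \<in> Tc (Fc (Tc X act) (Tact act)) (Fact (Tact act)).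
            eps act (\<Union> (lam act ` S)) = Gmap \<Union> (Tact act) (eps (Tact act) S))
       \<and> (\<forall>S \<in> Tc (Tc (Fc X act) (Fact act)) (Tact (Fact act)).
            eps act (\<Union> S) = Gmap \<Union> (Tact act) (rho (Tact act) (eps act ` S)))"
proof -
  have pa: "perm_act act" using assms unfolding nominal_set_def perm_act_def by blast
  show ?thesis using part1[OF pa] part2[OF pa] by blast
qed

end
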